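(* Let $F:\mathcal{P}(V,A)\to S_2(A)$ be a weakly viable consular election rule satisfying SPP and SPO. Then $F$ is unanimous: for every profile $P$ and $a\in A$, if $a$ is ranked first by every voter in $P$, then $a\in F(P)$.
   Context: $V$ is a finite nonempty set of voters, $A$ a finite set of alternatives; a profile $P$ assigns to each voter $i$ a linear order $P_i$ on $A$; $P_i'P_{-i}$ replaces voter $i$'s order by $P_i'$. $S_2(A)$ is the set of 2-element subsets of $A$; a consular election rule is a map $F:\mathcal{P}(V,A)\to S_2(A)$. SPO: for all $P$, $i$, $P_i'$, $\mathrm{best}(P_i,F(P))\succeq_i\mathrm{best}(P_i,F(P_i'P_{-i}))$; SPP: same with $\mathrm{worst}$, where $\mathrm{best}(P_i,W)$, $\mathrm{worst}(P_i,W)$ are the $P_i$-best and $P_i$-worst elements of $W$. Weakly viable: every $a\in A$ lies in $F(P)$ for some profile $P$. *)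

theory Defs
  imports Main
begin

text \<open>A preference is a linear order on the alternative set A, given as a (reflexive)
relation r with (x,y) \<in> r meaning "y is at least as good as x", i.e. x \<preceq> y.
A profile assigns a linear order on A to every voter in V; it is extensional
(the empty relation outside V) so that profiles are determined by their values on V.\<close>

definition profile :: "'v set \<Rightarrow> 'a set \<Rightarrow> ('v \<Rightarrow> 'a rel) \<Rightarrow> bool" where
  "profile V A P \<longleftrightarrow> (\<forall>i\<in>V. linear_order_on A (P i)) \<and> (\<forall>i. i \<notin> V \<longrightarrow> P i = {})"

definition S2 :: "'a set \<Rightarrow> 'a set set" where
  "S2 A = {W. W \<subseteq> A \<and> card W = 2}"

definition consular_rule :: "'v set \<Rightarrow> 'a set \<Rightarrow> (('v \<Rightarrow> 'a rel) \<Rightarrow> 'a set) \<Rightarrow> bool" where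
  "consular_rule V A F \<longleftrightarrow> (\<forall>P. profile V A P \<longrightarrow> F P \<in> S2 A)"

definition best :: "'a rel \<Rightarrow> 'a set \<Rightarrow> 'a" where
  "best r W = (THE x. x \<in> W \<and> (\<forall>y\<in>W. (y, x) \<in> r))"

definition worst :: "'a rel \<Rightarrow> 'a set \<Rightarrow> 'a" where
  "worst r W = (THE x. x \<in> W \<and> (\<forall>y\<in>W. (x, y) \<in> r))"

text \<open>SPO: no voter can obtain a strictly better best element of the outcome by misreporting.\<close>
definition SPO :: "'v set \<Rightarrow> 'a set \<Rightarrow> (('v \<Rightarrow> 'a rel) \<Rightarrow> 'a set) \<Rightarrow> bool" where
  "SPO V A F \<longleftrightarrow> (\<forall>P i Pi'. profile V A P \<longrightarrow> i \<in> V \<longrightarrow> linear_order_on A Pi' \<longrightarrow>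
      (best (P i) (F (P(i := Pi'))), best (P i) (F P)) \<in> P i)"

definition SPP :: "'v set \<Rightarrow> 'a set \<Rightarrow> (('v \<Rightarrow> 'a rel) \<Rightarrow> 'a set) \<Rightarrow> bool" where
  "SPP V A F \<longleftrightarrow> (\<forall>P i Pi'. profile V A P \<longrightarrow> i \<in> V \<longrightarrow> linear_order_on A Pi' \<longrightarrow>
      (worst (P i) (F (P(i := Pi'))), worst (P i) (F P)) \<in> P i)"

definition weakly_viable :: "'v set \<Rightarrow> 'a set \<Rightarrow> (('v \<Rightarrow> 'a rel) \<Rightarrow> 'a set) \<Rightarrow> bool" where
  "weakly_viable V A F \<longleftrightarrow> (\<forall>a\<in>A. \<exists>P. profile V A P \<and> a \<in> F P)"

definition unanimous :: "'v set \<Rightarrow> 'a set \<Rightarrow> (('v \<Rightarrow> 'a rel) \<Rightarrow> 'a set) \<Rightarrow> bool" where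
  "unanimous V A F \<longleftrightarrow> (\<forall>P a. profile V A P \<longrightarrow> a \<in> A \<longrightarrow>
      (\<forall>i\<in>V. \<forall>b\<in>A. (b, a) \<in> P i) \<longrightarrow> a \<in> F P)"

end

theory Submission
  imports Defs
begin

lemma best_top:
  assumes lo: "linear_order_on A r" and aW: "a \<in> W" and WA: "W \<subseteq> A"
    and top: "\<forall>b\<in>A. (b, a) \<in> r"
  shows "best r W = a"
  unfolding best_def
proof (rule the_equality)
  show "a \<in> W \<and> (\<forall>y\<in>W. (y, a) \<in> r)" using aW WA top by blast
next
  fix x assume x: "x \<in> W \<and> (\<forall>y\<in>W. (y, x) \<in> r)"
  have "(a, x) \<in> r" using x aW by blast
  moreover have "(x, a) \<in> r" using x WA top by blast
  moreover have "antisym r" using lo unfolding linear_order_on_def partial_order_on_def by blast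
  ultimately show "x = a" by (meson antisymD)
qed

lemma best_mem:
  assumes lo: "linear_order_on A r" and W: "W \<in> S2 A"
  shows "best r W \<in> W"
proof -
  obtain x y where xy: "W = {x, y}" "x \<noteq> y" using W unfolding S2_def by (auto simp: card_2_iff)
  have xA: "x \<in> A" and yA: "y \<in> A" using W xy unfolding S2_def by auto
  have refl: "refl_on A r" and tot: "total_on A r" and as: "antisym r"
    using lo unfolding linear_order_on_def partial_order_on_def preorder_on_def by auto
  have rx: "(x,x) \<in> r" "(y,y) \<in> r" using refl xA yA by (auto simp: refl_on_def)
  have "\<exists>z. z \<in> W \<and> (\<forall>u\<in>W. (u, z) \<in> r)"
  proof (cases "(x,y) \<in> r")
    case True then show ?thesis using xy rx by auto
  next
    case False
    then have "(y,x) \<in> r" using tot xA yA xy(2) by (auto simp: total_on_def)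
    then show ?thesis using xy rx by auto
  qed
  then obtain z where z: "z \<in> W \<and> (\<forall>u\<in>W. (u, z) \<in> r)" by blast
  have "\<And>w. w \<in> W \<and> (\<forall>u\<in>W. (u, w) \<in> r) \<Longrightarrow> w = z"
    using z as by (meson antisymD)
  then have "best r W = z" unfolding best_def using z by (rule the_equality[rotated])
  then show ?thesis using z by simp
qed

lemma step:
  assumes cons: "consular_rule V A F" and spo: "SPO V A F"
    and R: "profile V A R" and aR: "a \<in> F R" and j: "j \<in> V"
    and loj: "linear_order_on A Pj" and top: "\<forall>b\<in>A. (b, a) \<in> Pj"
  shows "a \<in> F (R(j := Pj))"
proof -
  let ?R' = "R(j := Pj)"
  have R': "profile V A ?R'" using R j loj unfolding profile_def by auto
  have loRj: "linear_order_on A (R j)" using R j unfolding profile_def by auto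
  have "(best (?R' j) (F (?R'(j := R j))), best (?R' j) (F ?R')) \<in> ?R' j"
    using spo R' j loRj unfolding SPO_def by blast
  moreover have "?R'(j := R j) = R" by simp
  ultimately have 1: "(best Pj (F R), best Pj (F ?R')) \<in> Pj" by simp
  have FR: "F R \<in> S2 A" and FR': "F ?R' \<in> S2 A" using cons R R' unfolding consular_rule_def by auto
  have "best Pj (F R) = a" using best_top[OF loj aR _ top] FR unfolding S2_def by auto
  with 1 have 2: "(a, best Pj (F ?R')) \<in> Pj" by simp
  have bm: "best Pj (F ?R') \<in> F ?R'" using best_mem[OF loj FR'] .
  then have "best Pj (F ?R') \<in> A" using FR' unfolding S2_def by auto
  then have 3: "(best Pj (F ?R'), a) \<in> Pj" using top by blast
  have "antisym Pj" using loj unfolding linear_order_on_def partial_order_on_def by blast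
  then have "best Pj (F ?R') = a" using 2 3 by (meson antisymD)
  then show ?thesis using bm by simp
qed

theorem corollary11:
  fixes V :: "'v set" and A :: "'a set" and F :: "('v \<Rightarrow> 'a rel) \<Rightarrow> 'a set"
  assumes "finite V" and "V \<noteq> {}" and "finite A"
    and "consular_rule V A F"
    and "weakly_viable V A F"
    and "SPP V A F"
    and "SPO V A F"
  shows "unanimous V A F"
  unfolding unanimous_def
proof (intro allI impI)
  fix P a
  assume P: "profile V A P" and aA: "a \<in> A" and top: "\<forall>i\<in>V. \<forall>b\<in>A. (b, a) \<in> P i"
  obtain Q where Q: "profile V A Q" "a \<in> F Q" using assms(5) aA unfolding weakly_viable_def by blast
  have "S \<subseteq> V \<Longrightarrow> profile V A (\<lambda>i. if i \<in> S then P i else Q i) \<and> a \<in> F (\<lambda>i. if i \<in> S then P i else Q i)"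
    for S
  proof -
    assume SV: "S \<subseteq> V"
    have "finite S" using SV assms(1) finite_subset by blast
    then show ?thesis using SV
    proof (induction S rule: finite_induct)
      case empty then show ?case using Q by simp
    next
      case (insert j S)
      let ?R = "\<lambda>i. if i \<in> S then P i else Q i"
      have IH: "profile V A ?R" "a \<in> F ?R" using insert by auto
      have j: "j \<in> V" using insert by auto
      have eq: "(\<lambda>i. if i \<in> insert j S then P i else Q i) = ?R(j := P j)" by (rule ext) auto
      have loj: "linear_order_on A (P j)" using P j unfolding profile_def by auto
      have "a \<in> F (?R(j := P j))"
        using step[OF assms(4) assms(7) IH(1) IH(2) j loj] top j by blast
      moreover have "profile V A (?R(j := P j))" using IH(1) j loj unfolding profile_def by auto
      ultimately show ?case using eq by simp
    qed
  qed
  from this[of V] have "a \<in> F (\<lambda>i. if i \<in> V then P i else Q i)" by simp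
  moreover have "(\<lambda>i. if i \<in> V then P i else Q i) = P"
    using P Q(1) unfolding profile_def by (intro ext) auto
  ultimately show "a \<in> F P" by simp
qed

end
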